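(* Let $k\geq2$ and let $L=(l_1,\dots,l_k)$ be positive real numbers with $l_1+\dots+l_k=1$ such that $p_1l_1+\dots+p_kl_k\neq0$ for every $p\in\mathbb{Z}^k\setminus\{0\}$. Then every connected component $Tonn^{\infty,k}(L)$ of the full irrational tonnetz $F\text{-}Tonn^{\infty,k}(L)$ is isomorphic as a simplicial complex to the Delone triangulation $\mathcal{D}_\Lambda$ associated with the permutohedral lattice $\Lambda\cong\mathbb{A}^\ast_{k-1}$.
   Context: $C=\mathbb{R}/\mathbb{Z}$ is the circle with its group structure. A finite subset of $C$ is $L$-admissible if it is a subset of some $\Delta(x;\sigma)=\{x,\,x+l_{\sigma(1)},\,x+l_{\sigma(1)}+l_{\sigma(2)},\dots,x+l_{\sigma(1)}+\dots+l_{\sigma(k-1)}\}$ with $x\in C$, $\sigma\in S_k$. The full irrational tonnetz $F\text{-}Tonn^{\infty,k}(L)$ is the $(k-1)$-dimensional simplicial complex (vertex set $C$) of all $L$-admissible subsets; $Tonn^{\infty,k}(L)$ denotes any of its connected components. $\Lambda=\{x\in\mathbb{Z}^k:\sum x_i=0,\text{ all }x_i\text{ congruent mod }k\}$, $a_i=ke_i-(1,\dots,1)$, $a_I=\sum_{i\in I}a_i$. $\mathcal{D}_\Lambda$ is the simplicial complex with vertex set $\Lambda$ whose simplices are the sets $\{z+a_{I_1},\dots,z+a_{I_s}\}$ with $z\in\Lambda$ and $I_1\subsetneq\dots\subsetneq I_s\subsetneq[k]$. *)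

theory Defs
  imports Complex_Main "HOL-Number_Theory.Cong" "HOL-Combinatorics.Permutations" "HOL-Library.FuncSet"
begin

text \<open>The circle C = R/Z is represented by its fundamental domain [0,1); the group
operation is addition followed by frac.  Indices are 0..<k instead of 1..k.\<close>

definition circle :: "real set" where
  "circle = {0..<1}"

definition Delta :: "nat \<Rightarrow> (nat \<Rightarrow> real) \<Rightarrow> real \<Rightarrow> (nat \<Rightarrow> nat) \<Rightarrow> real set" where
  "Delta k L x \<sigma> = {frac (x + (\<Sum>j<i. L (\<sigma> j))) | i. i < k}"

definition admissible :: "nat \<Rightarrow> (nat \<Rightarrow> real) \<Rightarrow> real set \<Rightarrow> bool" where
  "admissible k L S \<longleftrightarrow> finite S \<and>
     (\<exists>x\<in>circle. \<exists>\<sigma>. \<sigma> permutes {0..<k} \<and> S \<subseteq> Delta k L x \<sigma>)"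

definition full_tonnetz :: "nat \<Rightarrow> (nat \<Rightarrow> real) \<Rightarrow> real set set" where
  "full_tonnetz k L = {S. S \<noteq> {} \<and> admissible k L S}"

text \<open>Connectivity via the 1-skeleton; a connected component is given by its vertex set.\<close>
definition tonnetz_edge :: "nat \<Rightarrow> (nat \<Rightarrow> real) \<Rightarrow> real \<Rightarrow> real \<Rightarrow> bool" where
  "tonnetz_edge k L u v \<longleftrightarrow> u \<noteq> v \<and> {u, v} \<in> full_tonnetz k L"

definition tonnetz_component :: "nat \<Rightarrow> (nat \<Rightarrow> real) \<Rightarrow> real set \<Rightarrow> bool" where
  "tonnetz_component k L V \<longleftrightarrow>
     (\<exists>x0\<in>circle. V = {y. (tonnetz_edge k L)\<^sup>*\<^sup>* x0 y})"

definition tonnetz_restrict :: "nat \<Rightarrow> (nat \<Rightarrow> real) \<Rightarrow> real set \<Rightarrow> real set set" where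
  "tonnetz_restrict k L V = {S \<in> full_tonnetz k L. S \<subseteq> V}"

text \<open>Vectors of Z^k as functions nat => int vanishing outside 0..<k.\<close>
definition zvec :: "nat \<Rightarrow> (nat \<Rightarrow> int) set" where
  "zvec k = {x. \<forall>i\<ge>k. x i = 0}"

definition Lambda :: "nat \<Rightarrow> (nat \<Rightarrow> int) set" where
  "Lambda k = {x \<in> zvec k. (\<Sum>i<k. x i) = 0 \<and>
                  (\<forall>i<k. \<forall>j<k. [x i = x j] (mod int k))}"

definition avec :: "nat \<Rightarrow> nat \<Rightarrow> (nat \<Rightarrow> int)" where
  "avec k i = (\<lambda>j. if j < k then int k * (if j = i then 1 else 0) - 1 else 0)"

definition aset :: "nat \<Rightarrow> nat set \<Rightarrow> (nat \<Rightarrow> int)" where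
  "aset k I = (\<lambda>j. \<Sum>i\<in>I. avec k i j)"

text \<open>A chain I_1 < ... < I_s < [k] (s \<ge> 1) is represented as a nonempty set of proper
subsets of {0..<k} totally ordered by inclusion.\<close>
definition proper_chain :: "nat \<Rightarrow> nat set set \<Rightarrow> bool" where
  "proper_chain k \<I> \<longleftrightarrow> \<I> \<noteq> {} \<and> (\<forall>I\<in>\<I>. I \<subset> {0..<k}) \<and>
     (\<forall>I\<in>\<I>. \<forall>J\<in>\<I>. I \<subseteq> J \<or> J \<subseteq> I)"

definition delone :: "nat \<Rightarrow> (nat \<Rightarrow> int) set set" where
  "delone k = {(\<lambda>I. (\<lambda>j. z j + aset k I j)) ` \<I> | z \<I>. z \<in> Lambda k \<and> proper_chain k \<I>}"

definition simp_iso :: "'a set \<Rightarrow> 'a set set \<Rightarrow> 'b set \<Rightarrow> 'b set set \<Rightarrow> ('a \<Rightarrow> 'b) \<Rightarrow> bool" where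
  "simp_iso V K V' K' f \<longleftrightarrow> bij_betw f V V' \<and> (\<forall>S. S \<subseteq> V \<longrightarrow> (S \<in> K \<longleftrightarrow> f ` S \<in> K'))"

end

theory Submission
  imports Defs
begin

lemma finite_chain_max:
  assumes "finite C" "C \<noteq> {}" "\<forall>I\<in>C. \<forall>J\<in>C. I \<subseteq> J \<or> J \<subseteq> (I::'a set)"
  shows "\<exists>M\<in>C. \<forall>I\<in>C. I \<subseteq> M"
  using assms
proof (induction C rule: finite_ne_induct)
  case (singleton x) then show ?case by auto
next
  case (insert x F)
  then obtain M where M: "M \<in> F" "\<forall>I\<in>F. I \<subseteq> M" by auto
  have "x \<subseteq> M \<or> M \<subseteq> x" using insert.prems M(1) by auto
  then show ?case using M by blast
qed

lemma chain_perm: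
  "finite A \<Longrightarrow> card A = n \<Longrightarrow> (\<forall>I\<in>C. I \<subseteq> A) \<Longrightarrow> (\<forall>I\<in>C. \<forall>J\<in>C. I \<subseteq> J \<or> J \<subseteq> I) \<Longrightarrow>
   \<exists>\<tau>. bij_betw \<tau> {..<n} A \<and> (\<forall>I\<in>C. I = \<tau> ` {..<card I})"
proof (induction n arbitrary: A C)
  case 0
  then have "A = {}" by auto
  then have "bij_betw (\<lambda>_. undefined) {..<0::nat} A \<and> (\<forall>I\<in>C. I = (\<lambda>_. undefined) ` {..<card I})" using 0 by (auto simp: bij_betw_def)
  then show ?case by blast
next
  case (Suc m)
  have fC: "finite C" using Suc.prems(1,3) by (meson Pow_iff finite_Pow_iff finite_subset subsetI)
  obtain a where a: "a \<in> A" "\<forall>I\<in>C. I \<noteq> A \<longrightarrow> a \<notin> I"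
  proof (cases "C - {A} = {}")
    case True
    have "A \<noteq> {}" using Suc.prems by auto
    then show ?thesis using that True by blast
  next
    case False
    obtain M where M: "M \<in> C - {A}" "\<forall>I\<in>C - {A}. I \<subseteq> M"
      using finite_chain_max[of "C - {A}"] False fC Suc.prems(4) by auto
    then have "M \<subset> A" using Suc.prems(3) by auto
    then obtain a where "a \<in> A" "a \<notin> M" by auto
    then show ?thesis using that M by blast
  qed
  have "\<exists>\<tau>. bij_betw \<tau> {..<m} (A - {a}) \<and> (\<forall>I\<in>C - {A}. I = \<tau> ` {..<card I})"
  proof (rule Suc.IH)
    show "finite (A - {a})" "card (A - {a}) = m" using Suc.prems a by auto
    show "\<forall>I\<in>C - {A}. I \<subseteq> A - {a}" using Suc.prems(3) a by blast
    show "\<forall>I\<in>C - {A}. \<forall>J\<in>C - {A}. I \<subseteq> J \<or> J \<subseteq> I" using Suc.prems(4) by blast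
  qed
  then obtain \<tau> where t: "bij_betw \<tau> {..<m} (A - {a})" "\<forall>I\<in>C - {A}. I = \<tau> ` {..<card I}" by blast
  define \<tau>' where "\<tau>' = \<tau>(m := a)"
  have img: "\<tau>' ` {..<c} = \<tau> ` {..<c}" if "c \<le> m" for c
    using that unfolding \<tau>'_def by (auto simp: image_def)
  have b: "bij_betw \<tau>' {..<Suc m} A"
  proof -
    have e: "{..<Suc m} = insert m {..<m}" by auto
    have "\<tau>' ` {..<Suc m} = insert a (\<tau> ` {..<m})" unfolding e \<tau>'_def by auto
    also have "\<dots> = A" using t(1) a(1) by (auto simp: bij_betw_def)
    finally have i: "\<tau>' ` {..<Suc m} = A" .
    have "inj_on \<tau>' {..<Suc m}" unfolding e
      using t(1) unfolding \<tau>'_def bij_betw_def inj_on_def by (auto simp: image_def)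
    then show ?thesis using i by (simp add: bij_betw_def)
  qed
  show ?case
  proof (intro exI conjI ballI)
    show "bij_betw \<tau>' {..<Suc m} A" by (rule b)
    fix I assume I: "I \<in> C"
    show "I = \<tau>' ` {..<card I}"
    proof (cases "I = A")
      case True then show ?thesis using b Suc.prems(2) by (simp add: bij_betw_def)
    next
      case False
      then have "I \<subseteq> A - {a}" using I a Suc.prems(3) by auto
      then have "card I \<le> m" using Suc.prems(1,2) by (metis card_Diff_singleton a(1) card_mono finite_Diff diff_Suc_1)
      then show ?thesis using img t(2) I False by auto
    qed
  qed
qed

locale tonn =
  fixes k :: nat and L :: "nat \<Rightarrow> real" and x0 :: real
  assumes k2: "k \<ge> 2"
    and Lpos: "\<forall>i<k. L i > 0"
    and Lsum: "(\<Sum>i<k. L i) = 1"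
    and irr: "\<forall>p :: nat \<Rightarrow> int. (\<exists>i<k. p i \<noteq> 0) \<longrightarrow> (\<Sum>i<k. of_int (p i) * L i) \<noteq> 0"
    and x0: "x0 \<in> circle"
begin

definition ind :: "nat set \<Rightarrow> nat \<Rightarrow> int" where
  "ind J = (\<lambda>i. if i \<in> J then 1 else 0)"

definition lin :: "(nat \<Rightarrow> int) \<Rightarrow> real" where
  "lin n = (\<Sum>i<k. of_int (n i) * L i)"

definition g :: "(nat \<Rightarrow> int) \<Rightarrow> real" where
  "g n = frac (x0 + lin n)"

definition h :: "(nat \<Rightarrow> int) \<Rightarrow> nat \<Rightarrow> int" where
  "h n = (\<lambda>j. if j < k then int k * n j - (\<Sum>i<k. n i) else 0)"

lemma lin_add: "lin (\<lambda>i. n i + m i) = lin n + lin m"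
  unfolding lin_def by (simp add: distrib_right sum.distrib)

lemma lin_diff: "lin (\<lambda>i. n i - m i) = lin n - lin m"
  unfolding lin_def by (simp add: left_diff_distrib sum_subtractf)

lemma lin_const: "lin (\<lambda>i. c) = of_int c"
  unfolding lin_def sum_distrib_left[symmetric] Lsum by simp

lemma lin_ind: "J \<subseteq> {..<k} \<Longrightarrow> lin (ind J) = (\<Sum>i\<in>J. L i)"
proof -
  assume J: "J \<subseteq> {..<k}"
  have "lin (ind J) = (\<Sum>i<k. if i \<in> J then L i else 0)"
    unfolding lin_def ind_def by (intro sum.cong) auto
  also have "\<dots> = (\<Sum>i\<in>{..<k} \<inter> J. L i)" by (simp add: sum.inter_restrict)
  also have "{..<k} \<inter> J = J" using J by auto
  finally show ?thesis .
qed

lemma sum_sigma: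
  assumes "\<sigma> permutes {0..<k}" "i \<le> k"
  shows "(\<Sum>j<i. L (\<sigma> j)) = lin (ind (\<sigma> ` {..<i}))"
proof -
  have inj: "inj_on \<sigma> {..<i}" by (meson permutes_inj[OF assms(1)] inj_on_subset subset_UNIV)
  have sub: "\<sigma> ` {..<i} \<subseteq> {..<k}"
  proof -
    have "\<sigma> ` {..<i} \<subseteq> \<sigma> ` {0..<k}" using assms(2) by (intro image_mono) auto
    also have "\<dots> = {0..<k}" by (rule permutes_image[OF assms(1)])
    finally show ?thesis by auto
  qed
  have "(\<Sum>j<i. L (\<sigma> j)) = (\<Sum>j\<in>\<sigma> ` {..<i}. L j)" using sum.reindex[OF inj, of L] by (simp add: comp_def)
  then show ?thesis using lin_ind[OF sub] by simp
qed

lemma g_shift: "frac (g n + lin m) = g (\<lambda>i. n i + m i)"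
  unfolding g_def lin_add by (simp add: add.assoc)

lemma g_circle: "g n \<in> circle"
  unfolding circle_def g_def using frac_lt_1 frac_ge_0 by auto

lemma Delta_g:
  assumes "\<sigma> permutes {0..<k}"
  shows "Delta k L (g n) \<sigma> = {g (\<lambda>j. n j + ind (\<sigma> ` {..<i}) j) | i. i < k}"
proof -
  have e: "frac (g n + (\<Sum>j<i. L (\<sigma> j))) = g (\<lambda>j. n j + ind (\<sigma> ` {..<i}) j)" if "i < k" for i
    using sum_sigma[OF assms, of i] g_shift that by simp
  show ?thesis unfolding Delta_def
  proof (intro equalityI subsetI)
    fix x assume "x \<in> {frac (g n + (\<Sum>j<i. L (\<sigma> j))) |i. i < k}"
    then obtain i where "i < k" "x = frac (g n + (\<Sum>j<i. L (\<sigma> j)))" by blast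
    then show "x \<in> {g (\<lambda>j. n j + ind (\<sigma> ` {..<i}) j) |i. i < k}" using e[of i] by auto
  next
    fix x assume "x \<in> {g (\<lambda>j. n j + ind (\<sigma> ` {..<i}) j) |i. i < k}"
    then obtain i where "i < k" "x = g (\<lambda>j. n j + ind (\<sigma> ` {..<i}) j)" by blast
    then show "x \<in> {frac (g n + (\<Sum>j<i. L (\<sigma> j))) |i. i < k}" using e[of i] by (intro CollectI exI[of _ i]) auto
  qed
qed

lemma frac_eq_iff_int: "frac a = frac b \<longleftrightarrow> (\<exists>c::int. a - b = of_int c)"
proof
  assume "frac a = frac b"
  then obtain c where "a = b + of_int c" by (rule frac_eqE)
  then show "\<exists>c::int. a - b = of_int c" by auto
next
  assume "\<exists>c::int. a - b = of_int c"
  then obtain c where "a = b + of_int c" by (auto simp: algebra_simps)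
  then show "frac a = frac b" by simp
qed

lemma lin_zero: "lin p = 0 \<longleftrightarrow> (\<forall>i<k. p i = 0)"
proof
  assume "lin p = 0"
  then show "\<forall>i<k. p i = 0" using irr unfolding lin_def by blast
next
  assume "\<forall>i<k. p i = 0"
  then show "lin p = 0" unfolding lin_def by simp
qed

lemma g_eq: "g n = g m \<longleftrightarrow> (\<exists>c. \<forall>i<k. n i - m i = c)"
proof -
  have "g n = g m \<longleftrightarrow> (\<exists>c::int. lin n - lin m = of_int c)"
    unfolding g_def frac_eq_iff_int by (simp add: algebra_simps)
  also have "\<dots> \<longleftrightarrow> (\<exists>c::int. lin (\<lambda>i. n i - m i - c) = 0)"
    by (simp add: lin_diff lin_const)
  also have "\<dots> \<longleftrightarrow> (\<exists>c. \<forall>i<k. n i - m i = c)"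
    by (simp add: lin_zero)
  finally show ?thesis .
qed


lemma kpos: "k > 0" using k2 by auto

lemma h_eq: "h n = h m \<longleftrightarrow> (\<exists>c. \<forall>i<k. n i - m i = c)"
proof
  assume e: "h n = h m"
  have "\<forall>i<k. n i - m i = n 0 - m 0"
  proof (intro allI impI)
    fix i assume i: "i < k"
    have "h n i = h m i" "h n 0 = h m 0" using e by auto
    then have "int k * n i - (\<Sum>i<k. n i) = int k * m i - (\<Sum>i<k. m i)"
       "int k * n 0 - (\<Sum>i<k. n i) = int k * m 0 - (\<Sum>i<k. m i)"
      using i kpos unfolding h_def by auto
    then have "int k * (n i - m i) = int k * (n 0 - m 0)" by (simp add: algebra_simps)
    then show "n i - m i = n 0 - m 0" using kpos by simp
  qed
  then show "\<exists>c. \<forall>i<k. n i - m i = c" by blast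
next
  assume "\<exists>c. \<forall>i<k. n i - m i = c"
  then obtain c where c: "\<forall>i<k. n i - m i = c" by blast
  have "(\<Sum>i<k. n i) = (\<Sum>i<k. m i + c)" using c by (intro sum.cong) (auto simp: algebra_simps)
  also have "\<dots> = (\<Sum>i<k. m i) + int k * c" by (simp add: sum.distrib)
  finally have S: "(\<Sum>i<k. n i) = (\<Sum>i<k. m i) + int k * c" .
  show "h n = h m"
  proof
    fix j show "h n j = h m j"
    proof (cases "j < k")
      case True
      then have "n j = m j + c" using c by (auto simp: algebra_simps)
      then show ?thesis using True S unfolding h_def by (simp add: algebra_simps)
    qed (simp add: h_def)
  qed
qed

lemma h_add: "h (\<lambda>i. n i + m i) = (\<lambda>j. h n j + h m j)"
  unfolding h_def by (auto simp: sum.distrib algebra_simps)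

lemma card_ind: "J \<subseteq> {..<k} \<Longrightarrow> (\<Sum>i<k. ind J i) = int (card J)"
proof -
  assume J: "J \<subseteq> {..<k}"
  have "(\<Sum>i<k. ind J i) = (\<Sum>i\<in>{..<k} \<inter> J. 1)" unfolding ind_def using sum.inter_restrict[of "{..<k}" "\<lambda>_. 1::int" J] by simp
  also have "{..<k} \<inter> J = J" using J by auto
  finally show ?thesis by simp
qed

lemma h_ind: "J \<subseteq> {..<k} \<Longrightarrow> h (ind J) = aset k J"
proof
  fix j assume J: "J \<subseteq> {..<k}"
  have fJ: "finite J" using J finite_subset by blast
  show "h (ind J) j = aset k J j"
  proof (cases "j < k")
    case True
    have "aset k J j = (\<Sum>i\<in>J. int k * (if j = i then 1 else 0) - 1)"
      unfolding aset_def avec_def using True by simp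
    also have "\<dots> = int k * (\<Sum>i\<in>J. (if j = i then 1 else 0)) - int (card J)"
      by (simp add: sum_subtractf sum_distrib_left)
    also have "(\<Sum>i\<in>J. (if j = i then 1 else 0::int)) = ind J j"
      using fJ unfolding ind_def by simp
    finally show ?thesis using True card_ind[OF J] unfolding h_def by simp
  qed (simp add: h_def aset_def avec_def)
qed

lemma h_Lambda: "h n \<in> Lambda k"
  unfolding Lambda_def zvec_def
proof (intro CollectI conjI allI impI)
  show "\<And>i. k \<le> i \<Longrightarrow> h n i = 0" unfolding h_def by simp
  show "(\<Sum>i<k. h n i) = 0" unfolding h_def by (simp add: sum_subtractf sum_distrib_left)
  fix i j assume "i < k" "j < k"
  then show "[h n i = h n j] (mod int k)" unfolding h_def cong_iff_dvd_diff
    by (simp add: right_diff_distrib[symmetric])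
qed

lemma Lambda_h: "x \<in> Lambda k \<Longrightarrow> \<exists>n. h n = x"
proof -
  assume x: "x \<in> Lambda k"
  have k0: "0 < k" by (rule kpos)
  have dv: "int k dvd (x j - x 0)" if "j < k" for j
    using x that k0 unfolding Lambda_def cong_iff_dvd_diff by auto
  define n where "n = (\<lambda>j. (x j - x 0) div int k)"
  have kn: "int k * n j = x j - x 0" if "j < k" for j
    unfolding n_def using dv[OF that] by simp
  have "int k * (\<Sum>j<k. n j) = (\<Sum>j<k. x j - x 0)"
    by (simp add: sum_distrib_left kn)
  also have "\<dots> = - int k * x 0" using x unfolding Lambda_def by (simp add: sum_subtractf)
  finally have "int k * (\<Sum>j<k. n j) = int k * (- x 0)" by simp
  moreover have "int k \<noteq> 0" using k0 by simp
  ultimately have S: "(\<Sum>j<k. n j) = - x 0" using mult_left_cancel by blast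
  have "h n = x"
  proof
    fix j show "h n j = x j"
    proof (cases "j < k")
      case True then show ?thesis unfolding h_def using kn[OF True] S by simp
    next
      case False then show ?thesis using x unfolding h_def Lambda_def zvec_def by auto
    qed
  qed
  then show ?thesis by blast
qed


lemma lin_neg: "lin (\<lambda>i. - m i) = - lin m"
  unfolding lin_def by (simp add: sum_negf)

lemma g0: "g (\<lambda>_. 0) = x0"
  using x0 unfolding g_def lin_def circle_def by simp

lemma Delta_base:
  assumes "\<sigma> permutes {0..<k}" "z \<in> circle" "g m \<in> Delta k L z \<sigma>"
  shows "\<exists>n. z = g n"
proof -
  obtain a where a: "a < k" "g m = frac (z + (\<Sum>j<a. L (\<sigma> j)))"
    using assms(3) unfolding Delta_def by blast
  define A where "A = \<sigma> ` {..<a}"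
  have t: "(\<Sum>j<a. L (\<sigma> j)) = lin (ind A)" unfolding A_def using sum_sigma[OF assms(1)] a(1) by simp
  have "frac (g m + lin (\<lambda>i. - ind A i)) = frac (frac (z + lin (ind A)) + - lin (ind A))"
    using a(2) t lin_neg by simp
  also have "\<dots> = frac z" unfolding frac_add_simps(1) by simp
  also have "\<dots> = z" using assms(2) unfolding circle_def by simp
  finally have "z = g (\<lambda>i. m i + - ind A i)" using g_shift by simp
  then show ?thesis by blast
qed

lemma ind_single_neq: "i < k \<Longrightarrow> g n \<noteq> g (\<lambda>j. n j + ind {i} j)"
proof
  assume i: "i < k" and e: "g n = g (\<lambda>j. n j + ind {i} j)"
  have "\<exists>c. \<forall>j<k. n j - (n j + ind {i} j) = c" by (rule iffD1[OF g_eq e])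
  then obtain c where c: "\<forall>j<k. n j - (n j + ind {i} j) = c" by blast
  define j where "j = (if i = 0 then 1 else (0::nat))"
  have j: "j < k" "j \<noteq> i" unfolding j_def using k2 i by auto
  have "c = -1" using c[rule_format, OF i] by (simp add: ind_def)
  moreover have "c = 0" using c[rule_format, OF j(1)] j(2) by (simp add: ind_def)
  ultimately show False by simp
qed

lemma edge_step: "i < k \<Longrightarrow> tonnetz_edge k L (g n) (g (\<lambda>j. n j + ind {i} j))"
proof -
  assume i: "i < k"
  define \<sigma> where "\<sigma> = Transposition.transpose 0 i"
  have p: "\<sigma> permutes {0..<k}" unfolding \<sigma>_def using i by (intro permutes_swap_id) auto
  have s0: "\<sigma> ` {..<0} = {}" by simp
  have s1: "\<sigma> ` {..<1} = {i}" unfolding \<sigma>_def by (simp add: lessThan_Suc)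
  have k1: "1 < k" using k2 by simp
  have m0: "g n \<in> Delta k L (g n) \<sigma>" unfolding Delta_g[OF p]
  proof (intro CollectI exI[of _ 0] conjI)
    show "g n = g (\<lambda>j. n j + ind (\<sigma> ` {..<0}) j)" unfolding s0 ind_def by simp
  qed (use k2 in simp)
  have m1: "g (\<lambda>j. n j + ind {i} j) \<in> Delta k L (g n) \<sigma>" unfolding Delta_g[OF p]
  proof (intro CollectI exI[of _ 1] conjI)
    show "g (\<lambda>j. n j + ind {i} j) = g (\<lambda>j. n j + ind (\<sigma> ` {..<1}) j)" unfolding s1 ..
  qed (rule k1)
  have "admissible k L {g n, g (\<lambda>j. n j + ind {i} j)}"
    unfolding admissible_def using m0 m1 p g_circle by blast
  then show ?thesis unfolding tonnetz_edge_def full_tonnetz_def using ind_single_neq[OF i] by auto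
qed

lemma edge_sym: "tonnetz_edge k L u v \<Longrightarrow> tonnetz_edge k L v u"
  unfolding tonnetz_edge_def by (auto simp: insert_commute)

abbreviation R where "R y \<equiv> (tonnetz_edge k L)\<^sup>*\<^sup>* x0 y"

lemma reach_line:
  assumes "R (g n)" "i < k"
  shows "R (g (\<lambda>j. n j + c * ind {i} j))"
proof (induction c rule: int_induct[where k=0])
  case base then show ?case using assms by simp
next
  case (step1 c)
  have "tonnetz_edge k L (g (\<lambda>j. n j + c * ind {i} j)) (g (\<lambda>j. (n j + c * ind {i} j) + ind {i} j))"
    by (rule edge_step[OF assms(2)])
  moreover have "(\<lambda>j. (n j + c * ind {i} j) + ind {i} j) = (\<lambda>j. n j + (c + 1) * ind {i} j)"
    by (auto simp: algebra_simps)
  ultimately show ?case using step1 by (metis rtranclp.rtrancl_into_rtrancl)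
next
  case (step2 c)
  have "tonnetz_edge k L (g (\<lambda>j. n j + (c - 1) * ind {i} j)) (g (\<lambda>j. (n j + (c - 1) * ind {i} j) + ind {i} j))"
    by (rule edge_step[OF assms(2)])
  moreover have "(\<lambda>j. (n j + (c - 1) * ind {i} j) + ind {i} j) = (\<lambda>j. n j + c * ind {i} j)"
    by (auto simp: algebra_simps)
  ultimately show ?case using step2 edge_sym by (metis rtranclp.rtrancl_into_rtrancl)
qed

lemma reach_all: "R (g n)"
proof -
  have "R (g (\<lambda>j. if j < m then n j else 0))" for m
  proof (induction m)
    case 0 then show ?case using g0 by simp
  next
    case (Suc m)
    show ?case
    proof (cases "m < k")
      case True
      have "(\<lambda>j. if j < Suc m then n j else 0) = (\<lambda>j. (if j < m then n j else 0) + n m * ind {m} j)"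
        unfolding ind_def by (rule ext) (simp add: less_Suc_eq)
      then show ?thesis using reach_line[OF Suc.IH True, of "n m"] by simp
    next
      case False
      have "g (\<lambda>j. if j < Suc m then n j else 0) = g (\<lambda>j. if j < m then n j else 0)"
        unfolding g_eq using False by (intro exI[of _ 0]) auto
      then show ?thesis using Suc.IH by simp
    qed
  qed
  moreover have "g (\<lambda>j. if j < k then n j else 0) = g n"
    unfolding g_eq by (intro exI[of _ 0]) auto
  ultimately show ?thesis by metis
qed

lemma reach_inv: "R y \<Longrightarrow> \<exists>n. y = g n"
proof (induction rule: rtranclp_induct)
  case base then show ?case using g0 by metis
next
  case (step y z)
  then obtain n where n: "y = g n" by blast
  from step(2) obtain x \<sigma> where x: "x \<in> circle" "\<sigma> permutes {0..<k}" "{y, z} \<subseteq> Delta k L x \<sigma>"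
    unfolding tonnetz_edge_def full_tonnetz_def admissible_def by blast
  have "g n \<in> Delta k L x \<sigma>" using x(3) n by auto
  then obtain n' where "x = g n'" using Delta_base[OF x(2) x(1)] by blast
  then have "z \<in> {g (\<lambda>j. n' j + ind (\<sigma> ` {..<i}) j) | i. i < k}" using x Delta_g by auto
  then show ?case by blast
qed

lemma V_eq: "{y. R y} = range g"
  using reach_all reach_inv by blast


definition f :: "real \<Rightarrow> nat \<Rightarrow> int" where
  "f v = h (SOME n. g n = v)"

lemma g_h: "g a = g b \<longleftrightarrow> h a = h b"
  by (simp add: g_eq h_eq)

lemma f_g: "f (g n) = h n"
proof -
  have "g (SOME m. g m = g n) = g n" by (rule someI[of "\<lambda>m. g m = g n" n]) (rule refl)
  then show ?thesis unfolding f_def g_h .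
qed

lemma Delta_finite: "finite (Delta k L x \<sigma>)"
proof -
  have "Delta k L x \<sigma> = (\<lambda>i. frac (x + (\<Sum>j<i. L (\<sigma> j)))) ` {..<k}"
    unfolding Delta_def by auto
  then show ?thesis by simp
qed

lemma f_shift: "J \<subseteq> {..<k} \<Longrightarrow> f (g (\<lambda>j. n j + ind J j)) = (\<lambda>j. h n j + aset k J j)"
  by (simp add: f_g h_add h_ind)

lemma main: "simp_iso (range g) (tonnetz_restrict k L (range g)) (Lambda k) (delone k) f"
  unfolding simp_iso_def
proof (intro conjI allI impI)
  show "bij_betw f (range g) (Lambda k)"
    unfolding bij_betw_def
  proof
    show "inj_on f (range g)"
      by (auto simp: inj_on_def f_g g_h)
    have "f ` range g = range h" by (auto simp: f_g image_def)
    also have "\<dots> = Lambda k" using h_Lambda Lambda_h by blast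
    finally show "f ` range g = Lambda k" .
  qed
next
  fix S assume SV: "S \<subseteq> range g"
  show "S \<in> tonnetz_restrict k L (range g) \<longleftrightarrow> f ` S \<in> delone k"
  proof
    assume "S \<in> tonnetz_restrict k L (range g)"
    then obtain x \<sigma> where ne: "S \<noteq> {}" and x: "x \<in> circle" "\<sigma> permutes {0..<k}" "S \<subseteq> Delta k L x \<sigma>"
      unfolding tonnetz_restrict_def full_tonnetz_def admissible_def by blast
    obtain s where s: "s \<in> S" using ne by blast
    then obtain m where "s = g m" using SV by blast
    then obtain n where xn: "x = g n" using Delta_base[OF x(2) x(1)] x(3) s by blast
    have sub: "\<sigma> ` {..<i} \<subseteq> {..<k}" if "i \<le> k" for i
    proof -
      have "\<sigma> ` {..<i} \<subseteq> \<sigma> ` {0..<k}" using that by (intro image_mono) auto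
      also have "\<dots> = {0..<k}" by (rule permutes_image[OF x(2)])
      finally show ?thesis by auto
    qed
    have cardi: "card (\<sigma> ` {..<i}) = i" for i
      using permutes_inj[OF x(2)] by (simp add: card_image inj_on_subset)
    define P where "P i = g (\<lambda>j. n j + ind (\<sigma> ` {..<i}) j)" for i
    define II where "II = {\<sigma> ` {..<i} | i. i < k \<and> P i \<in> S}"
    have SD: "S \<subseteq> {P i | i. i < k}" using x(3) unfolding xn Delta_g[OF x(2)] P_def .
    have fP: "f (P i) = (\<lambda>j. h n j + aset k (\<sigma> ` {..<i}) j)" if "i < k" for i
      unfolding P_def using f_shift sub that by simp
    have img: "f ` S = (\<lambda>I. (\<lambda>j. h n j + aset k I j)) ` II"
    proof (intro equalityI subsetI)
      fix y assume "y \<in> f ` S"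
      then obtain t where t: "t \<in> S" "y = f t" by blast
      then obtain i where i: "i < k" "t = P i" using SD by blast
      then show "y \<in> (\<lambda>I. (\<lambda>j. h n j + aset k I j)) ` II"
        unfolding II_def using t fP by blast
    next
      fix y assume "y \<in> (\<lambda>I. (\<lambda>j. h n j + aset k I j)) ` II"
      then obtain i where i: "i < k" "P i \<in> S" "y = (\<lambda>j. h n j + aset k (\<sigma> ` {..<i}) j)"
        unfolding II_def by blast
      then show "y \<in> f ` S" using fP by (metis image_eqI)
    qed
    have pc: "proper_chain k II"
      unfolding proper_chain_def
    proof (intro conjI ballI)
      obtain i where "i < k" "s = P i" using SD s by blast
      then show "II \<noteq> {}" unfolding II_def using s by blast
    next
      fix I assume "I \<in> II"
      then obtain i where i: "i < k" "I = \<sigma> ` {..<i}" unfolding II_def by blast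
      have "I \<subseteq> {0..<k}" using sub[of i] i by auto
      moreover have "card I \<noteq> card {0..<k}" using cardi i by simp
      ultimately show "I \<subset> {0..<k}" by auto
    next
      fix I J assume "I \<in> II" "J \<in> II"
      then obtain i j where "I = \<sigma> ` {..<i}" "J = \<sigma> ` {..<j}" unfolding II_def by blast
      then show "I \<subseteq> J \<or> J \<subseteq> I"
        by (metis image_mono lessThan_subset_iff nat_le_linear)
    qed
    show "f ` S \<in> delone k"
      unfolding delone_def img using pc h_Lambda by blast
  next
    assume "f ` S \<in> delone k"
    then obtain z II where z: "z \<in> Lambda k" and pc: "proper_chain k II"
      and img: "f ` S = (\<lambda>I. (\<lambda>j. z j + aset k I j)) ` II"
      unfolding delone_def by blast
    obtain n where hn: "h n = z" using Lambda_h[OF z] by blast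
    have "\<exists>\<tau>. bij_betw \<tau> {..<k} {0..<k} \<and> (\<forall>I\<in>II. I = \<tau> ` {..<card I})"
      using chain_perm[of "{0..<k}" k II] pc unfolding proper_chain_def by auto
    then obtain \<tau> where tau: "bij_betw \<tau> {..<k} {0..<k}" "\<forall>I\<in>II. I = \<tau> ` {..<card I}" by blast
    define \<sigma> where "\<sigma> = (\<lambda>i. if i < k then \<tau> i else i)"
    have bs: "bij_betw \<sigma> {0..<k} {0..<k}"
      using tau(1) unfolding \<sigma>_def by (subst bij_betw_cong[where g=\<tau>]) (auto simp: atLeast0LessThan)
    have p: "\<sigma> permutes {0..<k}" using bs by (rule bij_imp_permutes) (simp add: \<sigma>_def)
    have st: "\<sigma> ` {..<c} = \<tau> ` {..<c}" if "c \<le> k" for c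
      using that unfolding \<sigma>_def by (auto simp: image_def)
    have SD: "S \<subseteq> Delta k L (g n) \<sigma>"
    proof
      fix s assume s: "s \<in> S"
      then obtain m where m: "s = g m" using SV by blast
      have "f s \<in> f ` S" using s by blast
      then obtain I where I: "I \<in> II" "h m = (\<lambda>j. z j + aset k I j)"
        unfolding img m f_g by blast
      have Ip: "I \<subset> {0..<k}" using I(1) pc unfolding proper_chain_def by blast
      then have ck: "card I < k" by (metis card_atLeastLessThan finite_atLeastLessThan psubset_card_mono diff_zero)
      have Isub: "I \<subseteq> {..<k}" using Ip by auto
      have "h m = h (\<lambda>j. n j + ind I j)" using I(2) hn h_add h_ind[OF Isub] by simp
      then have sI: "s = g (\<lambda>j. n j + ind I j)" using m g_h by simp
      define c where "c = card I"
      have Ie: "I = \<sigma> ` {..<c}" using tau(2) I(1) st ck unfolding c_def by simp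
      have "s = g (\<lambda>j. n j + ind (\<sigma> ` {..<c}) j)" using sI unfolding Ie .
      then show "s \<in> Delta k L (g n) \<sigma>" unfolding Delta_g[OF p] using ck unfolding c_def by blast
    qed
    have ne: "S \<noteq> {}" using img pc unfolding proper_chain_def by auto
    have "admissible k L S"
      unfolding admissible_def using SD p g_circle Delta_finite finite_subset by blast
    then show "S \<in> tonnetz_restrict k L (range g)"
      unfolding tonnetz_restrict_def full_tonnetz_def using ne SV by blast
  qed
qed

end

theorem theorem6p5:
  fixes k :: nat and L :: "nat \<Rightarrow> real"
  assumes "k \<ge> 2"
    and "\<forall>i<k. L i > 0"
    and "(\<Sum>i<k. L i) = 1"
    and "\<forall>p :: nat \<Rightarrow> int. (\<exists>i<k. p i \<noteq> 0) \<longrightarrow> (\<Sum>i<k. of_int (p i) * L i) \<noteq> 0"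
    and "tonnetz_component k L V"
  shows "\<exists>f. simp_iso V (tonnetz_restrict k L V) (Lambda k) (delone k) f"
proof -
  obtain x0 where hx0: "x0 \<in> circle" "V = {y. (tonnetz_edge k L)\<^sup>*\<^sup>* x0 y}"
    using assms(5) unfolding tonnetz_component_def by blast
  interpret tonn k L x0 using assms hx0 by unfold_locales auto
  have "V = range g" using hx0(2) V_eq by simp
  then show ?thesis using main by blast
qed

end
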